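(* Let $G$ be a bus graph containing an $(A,k,B,l)$-variable-box (as defined below), together with $\mathcal{B}$-vertices $O^i_A$ ($i=1,\dots,k$) and $O^j_B$ ($j=1,\dots,l$) and edges $(O^i_A,o^i_A)$ and $(O^j_B,o^j_B)$ joined to the box. Then in any realization $\Gamma$ of $G$: (1) $\Gamma((O^i_A,o^i_A))$ is perpendicular to $\Gamma(A)$ for every $i=1,\dots,k$; (2) $\Gamma((O^j_B,o^j_B))$ is perpendicular to $\Gamma(B)$ for every $j=1,\dots,l$.
   Context: A bus graph is a finite bipartite graph $G=(\mathcal{B},\mathcal{C};\mathcal{E})$ with $\deg(c)\le 4$ for all $c\in\mathcal{C}$. A realization $\Gamma$ of $G$ in the integer grid is a drawing such that: (1) each $B\in\mathcal{B}$ is drawn as a closed line segment $\Gamma(B)$ along a grid line (a "bus"); (2) each $c\in\mathcal{C}$ is drawn as a grid point $\Gamma(c)$; (3) each edge $(B,c)\in\mathcal{E}$ is drawn as a closed line segment along a grid line between a point of $\Gamma(B)$ and $\Gamma(c)$, perpendicular to $\Gamma(B)$, containing no connectors or buses other than $\Gamma(B)$ and $\Gamma(c)$ (edges may cross other edges); (4) no two buses or connectors intersect. An $(A,B)$-perp consists of three distinct $\mathcal{C}$-vertices $x,y,z$, five distinct $\mathcal{B}$-vertices $A,A',B,B',C$, and the twelve edges $(A,x),(A',x),(B,x),(B',x)$, $(A,y),(A',y),(B,y),(C,y)$, $(A,z),(A',z),(B',z),(C,z)$. An $(A,k,B,l)$-variable-box consists of an $(A,B)$-perp together with additional distinct $\mathcal{C}$-vertices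 $x_A,y_A,z_A,o^1_A,\dots,o^k_A,x_B,y_B,z_B,o^1_B,\dots,o^l_B$, additional distinct $\mathcal{B}$-vertices $R_A,S_A,T_A,U_A,R_B,S_B,T_B,U_B$, and the additional edges: $(A,x_A),(R_A,x_A),(S_A,x_A),(U_A,x_A)$; $(A,y_A),(R_A,y_A),(T_A,y_A),(U_A,y_A)$; $(A,z_A),(S_A,z_A),(T_A,z_A),(U_A,z_A)$; $(R_A,o^i_A),(S_A,o^i_A)$ for $i=1,\dots,k$; $(B,x_B),(R_B,x_B),(S_B,x_B),(U_B,x_B)$; $(B,y_B),(R_B,y_B),(T_B,y_B),(U_B,y_B)$; $(B,z_B),(S_B,z_B),(T_B,z_B),(U_B,z_B)$; $(R_B,o^j_B),(S_B,o^j_B)$ for $j=1,\dots,l$. *)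

theory Defs
  imports "HOL-Analysis.Analysis"
begin

definition bus_graph :: "'b set \<Rightarrow> 'c set \<Rightarrow> ('b \<times> 'c) set \<Rightarrow> bool" where
  "bus_graph Bs Cs E \<longleftrightarrow> finite Bs \<and> finite Cs \<and> E \<subseteq> Bs \<times> Cs \<and>
     (\<forall>c\<in>Cs. card {b. (b, c) \<in> E} \<le> 4)"

datatype orient = Hor | Ver

type_synonym pt = "real \<times> real"

text \<open>A bus is drawn as a closed axis-parallel segment on a grid line:
  (orientation, fixed coordinate, lower end, upper end).\<close>
type_synonym bus_draw = "orient \<times> real \<times> real \<times> real"

fun bus_set :: "bus_draw \<Rightarrow> pt set" where
  "bus_set (Hor, c, lo, hi) = {(x, c) | x. lo \<le> x \<and> x \<le> hi}"
| "bus_set (Ver, c, lo, hi) = {(c, y) | y. lo \<le> y \<and> y \<le> hi}"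

fun valid_bus :: "bus_draw \<Rightarrow> bool" where
  "valid_bus (o', c, lo, hi) \<longleftrightarrow> c \<in> \<int> \<and> lo \<le> hi"

abbreviation bus_orient :: "bus_draw \<Rightarrow> orient" where
  "bus_orient d \<equiv> fst d"

definition perp_to :: "pt \<Rightarrow> pt \<Rightarrow> orient \<Rightarrow> bool" where
  "perp_to p q o' \<longleftrightarrow> p \<noteq> q \<and>
     (if o' = Hor then fst p = fst q else snd p = snd q)"

definition grid_point :: "pt \<Rightarrow> bool" where
  "grid_point p \<longleftrightarrow> fst p \<in> \<int> \<and> snd p \<in> \<int>"

text \<open>A realization: GB draws the buses, GC the connectors, and the edge (B,c)
  is drawn as the closed segment from the attachment point GE B c (on the bus)
  to GC c.\<close>
definition realization ::
  "'b set \<Rightarrow> 'c set \<Rightarrow> ('b \<times> 'c) set \<Rightarrow> ('b \<Rightarrow> bus_draw) \<Rightarrow> ('c \<Rightarrow> pt)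
     \<Rightarrow> ('b \<Rightarrow> 'c \<Rightarrow> pt) \<Rightarrow> bool" where
  "realization Bs Cs E GB GC GE \<longleftrightarrow>
     (\<forall>B\<in>Bs. valid_bus (GB B)) \<and>
     (\<forall>c\<in>Cs. grid_point (GC c)) \<and>
     (\<forall>(B, c)\<in>E.
        GE B c \<in> bus_set (GB B) \<and>
        perp_to (GE B c) (GC c) (bus_orient (GB B)) \<and>
        (\<forall>c'\<in>Cs. c' \<noteq> c \<longrightarrow> GC c' \<notin> closed_segment (GE B c) (GC c)) \<and>
        (\<forall>B'\<in>Bs. B' \<noteq> B \<longrightarrow> bus_set (GB B') \<inter> closed_segment (GE B c) (GC c) = {})) \<and>
     (\<forall>B\<in>Bs. \<forall>B'\<in>Bs. B \<noteq> B' \<longrightarrow> bus_set (GB B) \<inter> bus_set (GB B') = {}) \<and>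
     (\<forall>c\<in>Cs. \<forall>c'\<in>Cs. c \<noteq> c' \<longrightarrow> GC c \<noteq> GC c') \<and>
     (\<forall>B\<in>Bs. \<forall>c\<in>Cs. GC c \<notin> bus_set (GB B))"

definition is_perp :: "('b \<times> 'c) set \<Rightarrow> 'b \<Rightarrow> 'b \<Rightarrow> 'b \<Rightarrow> 'b \<Rightarrow> 'b
    \<Rightarrow> 'c \<Rightarrow> 'c \<Rightarrow> 'c \<Rightarrow> bool" where
  "is_perp E A A' B B' C x y z \<longleftrightarrow>
     distinct [x, y, z] \<and> distinct [A, A', B, B', C] \<and>
     {(A, x), (A', x), (B, x), (B', x),
      (A, y), (A', y), (B, y), (C, y),
      (A, z), (A', z), (B', z), (C, z)} \<subseteq> E"

definition variable_box :: "('b \<times> 'c) set \<Rightarrow> 'b \<Rightarrow> 'b \<Rightarrow> 'b \<Rightarrow> 'b \<Rightarrow> 'b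
    \<Rightarrow> 'c \<Rightarrow> 'c \<Rightarrow> 'c
    \<Rightarrow> 'b \<Rightarrow> 'b \<Rightarrow> 'b \<Rightarrow> 'b \<Rightarrow> 'c \<Rightarrow> 'c \<Rightarrow> 'c \<Rightarrow> nat \<Rightarrow> (nat \<Rightarrow> 'c)
    \<Rightarrow> 'b \<Rightarrow> 'b \<Rightarrow> 'b \<Rightarrow> 'b \<Rightarrow> 'c \<Rightarrow> 'c \<Rightarrow> 'c \<Rightarrow> nat \<Rightarrow> (nat \<Rightarrow> 'c) \<Rightarrow> bool" where
  "variable_box E A A' B B' C x y z RA SA TA UA xA yA zA k oA RB SB TB UB xB yB zB l oB \<longleftrightarrow>
     is_perp E A A' B B' C x y z \<and>
     distinct [x, y, z, xA, yA, zA, xB, yB, zB] \<and>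
     inj_on oA {1..k} \<and> inj_on oB {1..l} \<and>
     oA ` {1..k} \<inter> oB ` {1..l} = {} \<and>
     oA ` {1..k} \<inter> {x, y, z, xA, yA, zA, xB, yB, zB} = {} \<and>
     oB ` {1..l} \<inter> {x, y, z, xA, yA, zA, xB, yB, zB} = {} \<and>
     distinct [A, A', B, B', C, RA, SA, TA, UA, RB, SB, TB, UB] \<and>
     {(A, xA), (RA, xA), (SA, xA), (UA, xA),
      (A, yA), (RA, yA), (TA, yA), (UA, yA),
      (A, zA), (SA, zA), (TA, zA), (UA, zA)} \<subseteq> E \<and>
     (\<forall>i\<in>{1..k}. (RA, oA i) \<in> E \<and> (SA, oA i) \<in> E) \<and>
     {(B, xB), (RB, xB), (SB, xB), (UB, xB),
      (B, yB), (RB, yB), (TB, yB), (UB, yB),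
      (B, zB), (SB, zB), (TB, zB), (UB, zB)} \<subseteq> E \<and>
     (\<forall>j\<in>{1..l}. (RB, oB j) \<in> E \<and> (SB, oB j) \<in> E)"

end

theory Submission
  imports Defs
begin

lemma seg_aux:
  fixes e1 e2 p :: "'a::real_vector"
  assumes "e1 - p = t *\<^sub>R (e2 - p)" "0 \<le> t" "t \<le> 1"
  shows "e1 \<in> closed_segment e2 p"
proof -
  have "e1 = (1 - (1 - t)) *\<^sub>R e2 + (1 - t) *\<^sub>R p"
    using assms(1) by (simp add: algebra_simps eq_diff_eq)
  then show ?thesis unfolding closed_segment_def using assms(2,3)
    by (intro CollectI exI[of _ "1 - t"]) auto
qed

lemma real_edge:
  assumes R: "realization Bs Cs E GB GC GE" and e: "(B1, c) \<in> E"
  shows "GE B1 c \<in> bus_set (GB B1) \<and>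
        perp_to (GE B1 c) (GC c) (bus_orient (GB B1)) \<and>
        (\<forall>c'\<in>Cs. c' \<noteq> c \<longrightarrow> GC c' \<notin> closed_segment (GE B1 c) (GC c)) \<and>
        (\<forall>B'\<in>Bs. B' \<noteq> B1 \<longrightarrow> bus_set (GB B') \<inter> closed_segment (GE B1 c) (GC c) = {})"
proof -
  have H: "\<forall>(B, c)\<in>E.
        GE B c \<in> bus_set (GB B) \<and>
        perp_to (GE B c) (GC c) (bus_orient (GB B)) \<and>
        (\<forall>c'\<in>Cs. c' \<noteq> c \<longrightarrow> GC c' \<notin> closed_segment (GE B c) (GC c)) \<and>
        (\<forall>B'\<in>Bs. B' \<noteq> B \<longrightarrow> bus_set (GB B') \<inter> closed_segment (GE B c) (GC c) = {})"
    using R unfolding realization_def by (elim conjE)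
  show ?thesis using bspec[OF H e] by simp
qed

lemma bad_pair:
  assumes R: "realization Bs Cs E GB GC GE" and e1: "(B1, c) \<in> E" and e2: "(B2, c) \<in> E"
    and ne: "B1 \<noteq> B2" and b1: "B1 \<in> Bs"
    and eq: "GE B1 c - GC c = t *\<^sub>R (GE B2 c - GC c)" and t: "0 \<le> t" "t \<le> 1"
  shows False
proof -
  have "GE B1 c \<in> bus_set (GB B1)" using real_edge[OF R e1] by blast
  moreover have "GE B1 c \<in> closed_segment (GE B2 c) (GC c)" using seg_aux eq t by blast
  moreover have "bus_set (GB B1) \<inter> closed_segment (GE B2 c) (GC c) = {}"
    using real_edge[OF R e2] ne b1 by blast
  ultimately show False by blast
qed

lemma comp_pair1:
  fixes d1 d2 :: "real \<times> real"
  assumes "fst d1 = 0" "fst d2 = 0" "snd d1 * snd d2 > 0"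
  shows "\<exists>t. 0 \<le> t \<and> t \<le> 1 \<and> (d1 = t *\<^sub>R d2 \<or> d2 = t *\<^sub>R d1)"
proof (cases "\<bar>snd d1\<bar> \<le> \<bar>snd d2\<bar>")
  case True
  have nz: "snd d2 \<noteq> 0" using assms(3) by auto
  have "0 \<le> snd d1 / snd d2" using assms(3) by (auto simp: zero_less_mult_iff zero_le_divide_iff)
  moreover have "snd d1 / snd d2 \<le> 1"
  proof -
    have "snd d1 / snd d2 = \<bar>snd d1 / snd d2\<bar>" using calculation by (rule abs_of_nonneg[symmetric])
    also have "\<dots> = \<bar>snd d1\<bar> / \<bar>snd d2\<bar>" by (rule abs_divide)
    also have "\<dots> \<le> 1" using True nz by simp
    finally show ?thesis .
  qed
  moreover have "d1 = (snd d1 / snd d2) *\<^sub>R d2" using assms(1,2) nz by (simp add: prod_eq_iff)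
  ultimately show ?thesis by blast
next
  case False
  have nz: "snd d1 \<noteq> 0" using assms(3) by auto
  have "0 \<le> snd d2 / snd d1" using assms(3) by (auto simp: zero_less_mult_iff zero_le_divide_iff)
  moreover have "snd d2 / snd d1 \<le> 1"
  proof -
    have "snd d2 / snd d1 = \<bar>snd d2 / snd d1\<bar>" using calculation by (rule abs_of_nonneg[symmetric])
    also have "\<dots> = \<bar>snd d2\<bar> / \<bar>snd d1\<bar>" by (rule abs_divide)
    also have "\<dots> \<le> 1" using False nz by simp
    finally show ?thesis .
  qed
  moreover have "d2 = (snd d2 / snd d1) *\<^sub>R d1" using assms(1,2) nz by (simp add: prod_eq_iff)
  ultimately show ?thesis by blast
qed

lemma comp_pair2:
  fixes d1 d2 :: "real \<times> real"
  assumes "snd d1 = 0" "snd d2 = 0" "fst d1 * fst d2 > 0"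
  shows "\<exists>t. 0 \<le> t \<and> t \<le> 1 \<and> (d1 = t *\<^sub>R d2 \<or> d2 = t *\<^sub>R d1)"
proof -
  obtain t where "0 \<le> t \<and> t \<le> 1 \<and> (prod.swap d1 = t *\<^sub>R prod.swap d2 \<or> prod.swap d2 = t *\<^sub>R prod.swap d1)"
    using comp_pair1[of "prod.swap d1" "prod.swap d2"] assms by auto
  then show ?thesis by (auto simp: prod_eq_iff)
qed

definition comp :: "orient \<Rightarrow> pt \<Rightarrow> real" where
  "comp o' d = (if o' = Hor then snd d else fst d)"

lemma edge_perp:
  assumes R: "realization Bs Cs E GB GC GE" and e: "(B1, c) \<in> E"
  shows "perp_to (GE B1 c) (GC c) (fst (GB B1))"
  using real_edge[OF R e] by blast

lemma pair_False:
  assumes R: "realization Bs Cs E GB GC GE" and e1: "(B1, c) \<in> E" and e2: "(B2, c) \<in> E"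
    and ne: "B1 \<noteq> B2" and b1: "B1 \<in> Bs" and b2: "B2 \<in> Bs"
    and o: "fst (GB B1) = fst (GB B2)"
    and pos: "comp (fst (GB B1)) (GE B1 c - GC c) * comp (fst (GB B1)) (GE B2 c - GC c) > 0"
  shows False
proof -
  have p1: "perp_to (GE B1 c) (GC c) (fst (GB B1))" using edge_perp[OF R e1] .
  have p2: "perp_to (GE B2 c) (GC c) (fst (GB B1))" using edge_perp[OF R e2] o by simp
  obtain t where t: "0 \<le> t" "t \<le> 1" and
     "GE B1 c - GC c = t *\<^sub>R (GE B2 c - GC c) \<or> GE B2 c - GC c = t *\<^sub>R (GE B1 c - GC c)"
  proof (cases "fst (GB B1) = Hor")
    case True
    then show ?thesis using that comp_pair1[of "GE B1 c - GC c" "GE B2 c - GC c"] p1 p2 pos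
      by (auto simp: perp_to_def comp_def)
  next
    case False
    then show ?thesis using that comp_pair2[of "GE B1 c - GC c" "GE B2 c - GC c"] p1 p2 pos
      by (auto simp: perp_to_def comp_def)
  qed
  then show False
    using bad_pair[OF R e1 e2 ne b1 _ t] bad_pair[OF R e2 e1 ne[symmetric] b2 _ t] by blast
qed

lemma comp_nz:
  assumes R: "realization Bs Cs E GB GC GE" and e: "(B1, c) \<in> E"
  shows "comp (fst (GB B1)) (GE B1 c - GC c) \<noteq> 0"
  using edge_perp[OF R e] by (auto simp: perp_to_def comp_def prod_eq_iff split: if_splits)

lemma three_same:
  assumes R: "realization Bs Cs E GB GC GE"
    and e1: "(B1, c) \<in> E" and e2: "(B2, c) \<in> E" and e3: "(B3, c) \<in> E"
    and d: "distinct [B1, B2, B3]" and b: "B1 \<in> Bs" "B2 \<in> Bs" "B3 \<in> Bs"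
    and o: "fst (GB B1) = fst (GB B2)" "fst (GB B2) = fst (GB B3)"
  shows False
proof -
  let ?c1 = "comp (fst (GB B1)) (GE B1 c - GC c)"
  let ?c2 = "comp (fst (GB B1)) (GE B2 c - GC c)"
  let ?c3 = "comp (fst (GB B1)) (GE B3 c - GC c)"
  have n: "?c1 \<noteq> 0" "?c2 \<noteq> 0" "?c3 \<noteq> 0"
    using comp_nz[OF R e1] comp_nz[OF R e2] comp_nz[OF R e3] o by auto
  have "?c1 * ?c2 > 0 \<or> ?c1 * ?c3 > 0 \<or> ?c2 * ?c3 > 0"
    using n by (auto simp: zero_less_mult_iff)
  moreover have "\<not> ?c1 * ?c2 > 0" using pair_False[OF R e1 e2 _ b(1,2)] d o by auto
  moreover have "\<not> ?c1 * ?c3 > 0" using pair_False[OF R e1 e3 _ b(1,3)] d o by auto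
  moreover have "\<not> ?c2 * ?c3 > 0" using pair_False[OF R e2 e3 _ b(2,3)] d o by auto
  ultimately show False by blast
qed

lemma orient_logic:
  fixes a r s t u :: orient
  assumes "\<not> (a = r \<and> r = s)" "\<not> (a = r \<and> r = u)" "\<not> (a = s \<and> s = u)" "\<not> (r = s \<and> s = u)"
    "\<not> (a = r \<and> r = t)" "\<not> (a = t \<and> t = u)" "\<not> (r = t \<and> t = u)"
    "\<not> (a = s \<and> s = t)" "\<not> (s = t \<and> t = u)"
  shows "r = s \<and> a \<noteq> r"
  using assms by (cases a; cases r; cases s; cases t; cases u) auto

lemma orient3: "(a::orient) \<noteq> b \<Longrightarrow> c \<noteq> b \<Longrightarrow> a = c"
  by (cases a; cases b; cases c) auto

lemma gadget:
  assumes R: "realization Bs Cs E GB GC GE" and sub: "E \<subseteq> Bs \<times> Cs"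
    and d: "distinct [A, RA, SA, TA, UA]"
    and es: "{(A, xA), (RA, xA), (SA, xA), (UA, xA),
      (A, yA), (RA, yA), (TA, yA), (UA, yA),
      (A, zA), (SA, zA), (TA, zA), (UA, zA)} \<subseteq> E"
    and eo: "(RA, cc) \<in> E" "(SA, cc) \<in> E" "(Ob, cc) \<in> E"
    and On: "Ob \<noteq> RA" "Ob \<noteq> SA"
  shows "perp_to (GE Ob cc) (GC cc) (fst (GB A))"
proof -
  have inB: "A \<in> Bs" "RA \<in> Bs" "SA \<in> Bs" "TA \<in> Bs" "UA \<in> Bs" "Ob \<in> Bs"
    using sub es eo by blast+
  note ts = three_same[OF R]
  have h0: "\<not> (fst (GB A) = fst (GB RA) \<and> fst (GB RA) = fst (GB SA))"
  proof
    assume "fst (GB A) = fst (GB RA) \<and> fst (GB RA) = fst (GB SA)"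
    moreover have "(A, xA) \<in> E" "(RA, xA) \<in> E" "(SA, xA) \<in> E" using es by blast+
    moreover have "distinct [A, RA, SA]" using d by simp
    ultimately show False using ts[of A xA RA SA] inB by blast
  qed
  have h1: "\<not> (fst (GB A) = fst (GB RA) \<and> fst (GB RA) = fst (GB UA))"
  proof
    assume "fst (GB A) = fst (GB RA) \<and> fst (GB RA) = fst (GB UA)"
    moreover have "(A, xA) \<in> E" "(RA, xA) \<in> E" "(UA, xA) \<in> E" using es by blast+
    moreover have "distinct [A, RA, UA]" using d by simp
    ultimately show False using ts[of A xA RA UA] inB by blast
  qed
  have h2: "\<not> (fst (GB A) = fst (GB SA) \<and> fst (GB SA) = fst (GB UA))"
  proof
    assume "fst (GB A) = fst (GB SA) \<and> fst (GB SA) = fst (GB UA)"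
    moreover have "(A, xA) \<in> E" "(SA, xA) \<in> E" "(UA, xA) \<in> E" using es by blast+
    moreover have "distinct [A, SA, UA]" using d by simp
    ultimately show False using ts[of A xA SA UA] inB by blast
  qed
  have h3: "\<not> (fst (GB RA) = fst (GB SA) \<and> fst (GB SA) = fst (GB UA))"
  proof
    assume "fst (GB RA) = fst (GB SA) \<and> fst (GB SA) = fst (GB UA)"
    moreover have "(RA, xA) \<in> E" "(SA, xA) \<in> E" "(UA, xA) \<in> E" using es by blast+
    moreover have "distinct [RA, SA, UA]" using d by simp
    ultimately show False using ts[of RA xA SA UA] inB by blast
  qed
  have h4: "\<not> (fst (GB A) = fst (GB RA) \<and> fst (GB RA) = fst (GB TA))"
  proof
    assume "fst (GB A) = fst (GB RA) \<and> fst (GB RA) = fst (GB TA)"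
    moreover have "(A, yA) \<in> E" "(RA, yA) \<in> E" "(TA, yA) \<in> E" using es by blast+
    moreover have "distinct [A, RA, TA]" using d by simp
    ultimately show False using ts[of A yA RA TA] inB by blast
  qed
  have h5: "\<not> (fst (GB A) = fst (GB TA) \<and> fst (GB TA) = fst (GB UA))"
  proof
    assume "fst (GB A) = fst (GB TA) \<and> fst (GB TA) = fst (GB UA)"
    moreover have "(A, yA) \<in> E" "(TA, yA) \<in> E" "(UA, yA) \<in> E" using es by blast+
    moreover have "distinct [A, TA, UA]" using d by simp
    ultimately show False using ts[of A yA TA UA] inB by blast
  qed
  have h6: "\<not> (fst (GB RA) = fst (GB TA) \<and> fst (GB TA) = fst (GB UA))"
  proof
    assume "fst (GB RA) = fst (GB TA) \<and> fst (GB TA) = fst (GB UA)"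
    moreover have "(RA, yA) \<in> E" "(TA, yA) \<in> E" "(UA, yA) \<in> E" using es by blast+
    moreover have "distinct [RA, TA, UA]" using d by simp
    ultimately show False using ts[of RA yA TA UA] inB by blast
  qed
  have h7: "\<not> (fst (GB A) = fst (GB SA) \<and> fst (GB SA) = fst (GB TA))"
  proof
    assume "fst (GB A) = fst (GB SA) \<and> fst (GB SA) = fst (GB TA)"
    moreover have "(A, zA) \<in> E" "(SA, zA) \<in> E" "(TA, zA) \<in> E" using es by blast+
    moreover have "distinct [A, SA, TA]" using d by simp
    ultimately show False using ts[of A zA SA TA] inB by blast
  qed
  have h8: "\<not> (fst (GB SA) = fst (GB TA) \<and> fst (GB TA) = fst (GB UA))"
  proof
    assume "fst (GB SA) = fst (GB TA) \<and> fst (GB TA) = fst (GB UA)"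
    moreover have "(SA, zA) \<in> E" "(TA, zA) \<in> E" "(UA, zA) \<in> E" using es by blast+
    moreover have "distinct [SA, TA, UA]" using d by simp
    ultimately show False using ts[of SA zA TA UA] inB by blast
  qed
  have "fst (GB RA) = fst (GB SA) \<and> fst (GB A) \<noteq> fst (GB RA)"
    by (rule orient_logic[OF h0 h1 h2 h3 h4 h5 h6 h7 h8])
  moreover have "\<not> (fst (GB RA) = fst (GB SA) \<and> fst (GB SA) = fst (GB Ob))"
    proof
    assume "fst (GB RA) = fst (GB SA) \<and> fst (GB SA) = fst (GB Ob)"
    moreover have "distinct [RA, SA, Ob]" using d On by auto
    ultimately show False using ts[of RA cc SA Ob] eo inB by blast
  qed
  ultimately have "fst (GB Ob) = fst (GB A)" using orient3 by metis
  then show ?thesis using edge_perp[OF R eo(3)] by simp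
qed

theorem lemma5:
  fixes Bs :: "'b set" and Cs :: "'c set" and E :: "('b \<times> 'c) set"
    and GB :: "'b \<Rightarrow> bus_draw" and GC :: "'c \<Rightarrow> pt" and GE :: "'b \<Rightarrow> 'c \<Rightarrow> pt"
    and k l :: nat and oA oB :: "nat \<Rightarrow> 'c" and OA OB :: "nat \<Rightarrow> 'b"
  assumes G: "bus_graph Bs Cs E"
    and box: "variable_box E A A' B B' C x y z RA SA TA UA xA yA zA k oA
                RB SB TB UB xB yB zB l oB"
    and OA_inj: "inj_on OA {1..k}" and OB_inj: "inj_on OB {1..l}"
    and OAB: "OA ` {1..k} \<inter> OB ` {1..l} = {}"
    and OA_new: "OA ` {1..k} \<inter> {A, A', B, B', C, RA, SA, TA, UA, RB, SB, TB, UB} = {}"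
    and OB_new: "OB ` {1..l} \<inter> {A, A', B, B', C, RA, SA, TA, UA, RB, SB, TB, UB} = {}"
    and OA_edges: "\<forall>i\<in>{1..k}. (OA i, oA i) \<in> E"
    and OB_edges: "\<forall>j\<in>{1..l}. (OB j, oB j) \<in> E"
    and R: "realization Bs Cs E GB GC GE"
  shows "(\<forall>i\<in>{1..k}. perp_to (GE (OA i) (oA i)) (GC (oA i)) (bus_orient (GB A))) \<and>
         (\<forall>j\<in>{1..l}. perp_to (GE (OB j) (oB j)) (GC (oB j)) (bus_orient (GB B)))"
proof -
  have sub: "E \<subseteq> Bs \<times> Cs" using G unfolding bus_graph_def by blast
  have vb: "distinct [A, A', B, B', C, RA, SA, TA, UA, RB, SB, TB, UB]"
    "{(A, xA), (RA, xA), (SA, xA), (UA, xA),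
      (A, yA), (RA, yA), (TA, yA), (UA, yA),
      (A, zA), (SA, zA), (TA, zA), (UA, zA)} \<subseteq> E"
    "\<forall>i\<in>{1..k}. (RA, oA i) \<in> E \<and> (SA, oA i) \<in> E"
    "{(B, xB), (RB, xB), (SB, xB), (UB, xB),
      (B, yB), (RB, yB), (TB, yB), (UB, yB),
      (B, zB), (SB, zB), (TB, zB), (UB, zB)} \<subseteq> E"
    "\<forall>j\<in>{1..l}. (RB, oB j) \<in> E \<and> (SB, oB j) \<in> E"
    using box unfolding variable_box_def by auto
  have dA: "distinct [A, RA, SA, TA, UA]" and dB: "distinct [B, RB, SB, TB, UB]"
    using vb(1) by auto
  show ?thesis
  proof (intro conjI ballI)
    fix i assume i: "i \<in> {1..k}"
    have "OA i \<noteq> RA" "OA i \<noteq> SA" using OA_new i by blast+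
    then show "perp_to (GE (OA i) (oA i)) (GC (oA i)) (bus_orient (GB A))"
      using gadget[OF R sub dA vb(2)] vb(3) OA_edges i by blast
  next
    fix j assume j: "j \<in> {1..l}"
    have "OB j \<noteq> RB" "OB j \<noteq> SB" using OB_new j by blast+
    then show "perp_to (GE (OB j) (oB j)) (GC (oB j)) (bus_orient (GB B))"
      using gadget[OF R sub dB vb(4)] vb(5) OB_edges j by blast
  qed
qed

end
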